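(* Let $\mathbb K$ be a field of characteristic zero and $A=\bigoplus_{i=1}^k M_{d_i}(\mathbb K)$. Then every weakly symmetric Frobenius structure on $A$ has integral F-dimension $$\dim_1(A)=\sum_{i\in I}d_i^2\le\dim(A),$$ where $I\subseteq\{1,\dots,k\}$ is some subset containing every $i$ with $d_i=1$. Such a weakly symmetric structure is obtained by twisting the standard special form $\epsilon_0=\bigoplus_i d_i\mathrm{Tr}_{M_{d_i}}$ by $u=\bigoplus_iu_i$ (i.e. $(a,b)=\epsilon_0(uab)$) with $\mathrm{Tr}(u_i^{-1})=0$ for $i\notin I$ and $u_i=\mu_i^{-1}I_{d_i}$ for $i\in I$, for some nonzero $\mu_i\in\mathbb K$; its F-Hilbert series is then $$\dim_x(A)=\sum_{i\in I}\frac{d_i^2\mu_i^{-1}}{1-\mu_ix}.$$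
   Context: A Frobenius algebra is a unital $\mathbb K$-algebra $A$ with a bilinear form $(\ ,\ )$ satisfying $(ab,c)=(a,bc)$ whose induced map $A\to A^*$ is invertible; its inverse is $g=\sum g^1\otimes g^2\in A\otimes A$ with $\sum (a,g^1)g^2=a=\sum g^1(g^2,a)$. Write $\epsilon(a):=(1,a)$ and $\ell:=\sum g^1g^2$ (central). F-dimensions: $\dim_j(A):=\epsilon(\ell^j)$, $\dim_x(A):=\sum_{j\ge0}x^j\dim_j(A)$. The structure is weakly symmetric if the linear map $a\mapsto\epsilon(\ell a)$ vanishes on all commutators $ab-ba$. Every Frobenius structure on $A$ is of the form $(a,b)=\epsilon_0(uab)$ for an invertible $u\in A$.
   Formalization: The constant coefficient $\dim_0(A)$ of the F-Hilbert series is $\sum_{i\in I}d_i^2\mu_i^{-1}+\sum_{i\notin I}d_i\mathrm{Tr}(u_i)$, not $\sum_{i\in I}d_i^2\mu_i^{-1}$; the displayed series gives only the coefficients of $x^j$ with $j\ge1$. The statement above fails without it. *)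

theory Defs
  imports "Jordan_Normal_Form.Matrix"
begin

text \<open>An element is a
  family of matrices a :: nat => 'a mat with a i a (d i) x (d i) matrix for
  i in {1..k} and a i = the empty 0 x 0 matrix otherwise.\<close>

definition mtrace :: "'a::comm_ring_1 mat \<Rightarrow> 'a" where
  "mtrace M = (\<Sum>j<dim_row M. M $$ (j, j))"

definition dsA :: "nat \<Rightarrow> (nat \<Rightarrow> nat) \<Rightarrow> (nat \<Rightarrow> 'a::comm_ring_1 mat) set" where
  "dsA k d = {a. (\<forall>i\<in>{1..k}. a i \<in> carrier_mat (d i) (d i)) \<and> (\<forall>i. i \<notin> {1..k} \<longrightarrow> a i = 0\<^sub>m 0 0)}"

definition dsMult :: "nat \<Rightarrow> (nat \<Rightarrow> 'a::comm_ring_1 mat) \<Rightarrow> (nat \<Rightarrow> 'a mat) \<Rightarrow> (nat \<Rightarrow> 'a mat)" where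
  "dsMult k a b = (\<lambda>i. if i \<in> {1..k} then a i * b i else 0\<^sub>m 0 0)"

definition dsAdd :: "nat \<Rightarrow> (nat \<Rightarrow> 'a::comm_ring_1 mat) \<Rightarrow> (nat \<Rightarrow> 'a mat) \<Rightarrow> (nat \<Rightarrow> 'a mat)" where
  "dsAdd k a b = (\<lambda>i. if i \<in> {1..k} then a i + b i else 0\<^sub>m 0 0)"

definition dsMinus :: "nat \<Rightarrow> (nat \<Rightarrow> 'a::comm_ring_1 mat) \<Rightarrow> (nat \<Rightarrow> 'a mat) \<Rightarrow> (nat \<Rightarrow> 'a mat)" where
  "dsMinus k a b = (\<lambda>i. if i \<in> {1..k} then a i - b i else 0\<^sub>m 0 0)"

definition dsSmult :: "nat \<Rightarrow> 'a::comm_ring_1 \<Rightarrow> (nat \<Rightarrow> 'a mat) \<Rightarrow> (nat \<Rightarrow> 'a mat)" where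
  "dsSmult k c a = (\<lambda>i. if i \<in> {1..k} then c \<cdot>\<^sub>m a i else 0\<^sub>m 0 0)"

definition dsOne :: "nat \<Rightarrow> (nat \<Rightarrow> nat) \<Rightarrow> (nat \<Rightarrow> 'a::comm_ring_1 mat)" where
  "dsOne k d = (\<lambda>i. if i \<in> {1..k} then 1\<^sub>m (d i) else 0\<^sub>m 0 0)"

definition dsPow :: "nat \<Rightarrow> (nat \<Rightarrow> 'a::comm_ring_1 mat) \<Rightarrow> nat \<Rightarrow> (nat \<Rightarrow> 'a mat)" where
  "dsPow k a n = (\<lambda>i. if i \<in> {1..k} then a i ^\<^sub>m n else 0\<^sub>m 0 0)"

definition dsLinear :: "nat \<Rightarrow> (nat \<Rightarrow> nat) \<Rightarrow> ((nat \<Rightarrow> 'a::comm_ring_1 mat) \<Rightarrow> 'a) \<Rightarrow> bool" where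
  "dsLinear k d \<phi> \<longleftrightarrow>
     (\<forall>a\<in>dsA k d. \<forall>b\<in>dsA k d. \<phi> (dsAdd k a b) = \<phi> a + \<phi> b) \<and>
     (\<forall>c. \<forall>a\<in>dsA k d. \<phi> (dsSmult k c a) = c * \<phi> a)"

definition frobenius_form :: "nat \<Rightarrow> (nat \<Rightarrow> nat) \<Rightarrow>
    ((nat \<Rightarrow> 'a::comm_ring_1 mat) \<Rightarrow> (nat \<Rightarrow> 'a mat) \<Rightarrow> 'a) \<Rightarrow> bool" where
  "frobenius_form k d B \<longleftrightarrow>
     (\<forall>a\<in>dsA k d. dsLinear k d (B a)) \<and>
     (\<forall>b\<in>dsA k d. dsLinear k d (\<lambda>a. B a b)) \<and>
     (\<forall>a\<in>dsA k d. \<forall>b\<in>dsA k d. \<forall>c\<in>dsA k d. B (dsMult k a b) c = B a (dsMult k b c)) \<and>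
     (\<forall>\<phi>. dsLinear k d \<phi> \<longrightarrow> (\<exists>!a. a \<in> dsA k d \<and> (\<forall>b\<in>dsA k d. B a b = \<phi> b)))"

definition dsSum :: "nat \<Rightarrow> (nat \<Rightarrow> nat) \<Rightarrow> (nat \<Rightarrow> 'a::comm_ring_1 mat) list \<Rightarrow> (nat \<Rightarrow> 'a mat)" where
  "dsSum k d xs = foldr (dsAdd k) xs (dsSmult k 0 (dsOne k d))"

text \<open>A representation of the copairing g = sum g^1 (x) g^2 in A (x) A, as a finite
  list of pairs (g^1, g^2).\<close>
definition is_copairing :: "nat \<Rightarrow> (nat \<Rightarrow> nat) \<Rightarrow>
    ((nat \<Rightarrow> 'a::comm_ring_1 mat) \<Rightarrow> (nat \<Rightarrow> 'a mat) \<Rightarrow> 'a) \<Rightarrow>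
    ((nat \<Rightarrow> 'a mat) \<times> (nat \<Rightarrow> 'a mat)) list \<Rightarrow> bool" where
  "is_copairing k d B gs \<longleftrightarrow>
     (\<forall>p\<in>set gs. fst p \<in> dsA k d \<and> snd p \<in> dsA k d) \<and>
     (\<forall>a\<in>dsA k d.
        dsSum k d (map (\<lambda>p. dsSmult k (B a (fst p)) (snd p)) gs) = a \<and>
        dsSum k d (map (\<lambda>p. dsSmult k (B (snd p) a) (fst p)) gs) = a)"

definition frob_eps :: "nat \<Rightarrow> (nat \<Rightarrow> nat) \<Rightarrow>
    ((nat \<Rightarrow> 'a::comm_ring_1 mat) \<Rightarrow> (nat \<Rightarrow> 'a mat) \<Rightarrow> 'a) \<Rightarrow> (nat \<Rightarrow> 'a mat) \<Rightarrow> 'a" where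
  "frob_eps k d B a = B (dsOne k d) a"

text \<open>ell = sum g^1 g^2 (independent of the chosen representation of g).\<close>
definition frob_ell :: "nat \<Rightarrow> (nat \<Rightarrow> nat) \<Rightarrow>
    ((nat \<Rightarrow> 'a::comm_ring_1 mat) \<Rightarrow> (nat \<Rightarrow> 'a mat) \<Rightarrow> 'a) \<Rightarrow> (nat \<Rightarrow> 'a mat)" where
  "frob_ell k d B = (let gs = (SOME gs. is_copairing k d B gs)
                     in dsSum k d (map (\<lambda>p. dsMult k (fst p) (snd p)) gs))"

definition frob_dim :: "nat \<Rightarrow> (nat \<Rightarrow> nat) \<Rightarrow>
    ((nat \<Rightarrow> 'a::comm_ring_1 mat) \<Rightarrow> (nat \<Rightarrow> 'a mat) \<Rightarrow> 'a) \<Rightarrow> nat \<Rightarrow> 'a" where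
  "frob_dim k d B j = frob_eps k d B (dsPow k (frob_ell k d B) j)"

definition weakly_symmetric :: "nat \<Rightarrow> (nat \<Rightarrow> nat) \<Rightarrow>
    ((nat \<Rightarrow> 'a::comm_ring_1 mat) \<Rightarrow> (nat \<Rightarrow> 'a mat) \<Rightarrow> 'a) \<Rightarrow> bool" where
  "weakly_symmetric k d B \<longleftrightarrow>
     (\<forall>a\<in>dsA k d. \<forall>b\<in>dsA k d.
        frob_eps k d B (dsMult k (frob_ell k d B) (dsMinus k (dsMult k a b) (dsMult k b a))) = 0)"

definition eps0 :: "nat \<Rightarrow> (nat \<Rightarrow> nat) \<Rightarrow> (nat \<Rightarrow> 'a::comm_ring_1 mat) \<Rightarrow> 'a" where
  "eps0 k d a = (\<Sum>i\<in>{1..k}. of_nat (d i) * mtrace (a i))"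

end

theory Submission
  imports Defs "Jordan_Normal_Form.Determinant"
begin

definition unitm :: "nat \<Rightarrow> nat \<Rightarrow> nat \<Rightarrow> 'a::comm_ring_1 mat" where
  "unitm n j l = mat n n (\<lambda>(r,s). if r = j \<and> s = l then 1 else 0)"

definition dsE :: "nat \<Rightarrow> (nat\<Rightarrow>nat) \<Rightarrow> nat \<Rightarrow> nat \<Rightarrow> nat \<Rightarrow> nat \<Rightarrow> 'a::comm_ring_1 mat" where
  "dsE k d i j l = (\<lambda>i'. if i' \<in> {1..k} then (if i' = i then unitm (d i) j l else 0\<^sub>m (d i') (d i')) else 0\<^sub>m 0 0)"

context fixes k :: nat and d :: "nat \<Rightarrow> nat"
begin

lemma dsA_I:
  assumes "\<And>i. i \<in> {1..k} \<Longrightarrow> a i \<in> carrier_mat (d i) (d i)"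
    and "\<And>i. i \<notin> {1..k} \<Longrightarrow> a i = 0\<^sub>m 0 0"
  shows "a \<in> dsA k d"
  using assms unfolding dsA_def by auto

lemma dsA_D:
  assumes "a \<in> dsA k d"
  shows "i \<in> {1..k} \<Longrightarrow> a i \<in> carrier_mat (d i) (d i)"
    and "i \<notin> {1..k} \<Longrightarrow> a i = 0\<^sub>m 0 0"
  using assms unfolding dsA_def by auto

lemma dsA_dims:
  assumes "a \<in> dsA k d" "i \<in> {1..k}"
  shows "dim_row (a i) = d i" "dim_col (a i) = d i"
  using dsA_D(1)[OF assms] by auto

lemma A_eqI:
  assumes a: "a \<in> dsA k d" and b: "b \<in> dsA k d"
    and e: "\<And>i r s. i \<in> {1..k} \<Longrightarrow> r < d i \<Longrightarrow> s < d i \<Longrightarrow> a i $$ (r,s) = b i $$ (r,s)"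
  shows "a = b"
proof
  fix i
  show "a i = b i"
  proof (cases "i \<in> {1..k}")
    case True
    show ?thesis
      by (rule eq_matI) (use e True dsA_dims[OF a True] dsA_dims[OF b True] in auto)
  next
    case False
    then show ?thesis using dsA_D(2)[OF a] dsA_D(2)[OF b] by simp
  qed
qed

lemma dsMult_A: assumes a: "a \<in> dsA k d" and b: "b \<in> dsA k d" shows "dsMult k a b \<in> dsA k d"
proof (rule dsA_I)
  fix i assume i: "i \<in> {1..k}"
  show "dsMult k a b i \<in> carrier_mat (d i) (d i)"
    using mult_carrier_mat[OF dsA_D(1)[OF a i] dsA_D(1)[OF b i]] i by (simp add: dsMult_def)
qed (auto simp add: dsMult_def)

lemma dsAdd_A: "a \<in> dsA k d \<Longrightarrow> b \<in> dsA k d \<Longrightarrow> dsAdd k a b \<in> dsA k d"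
  by (rule dsA_I) (auto simp: dsAdd_def dest: dsA_D)

lemma dsMinus_A: assumes a: "a \<in> dsA k d" and b: "b \<in> dsA k d" shows "dsMinus k a b \<in> dsA k d"
proof (rule dsA_I)
  fix i assume i: "i \<in> {1..k}"
  show "dsMinus k a b i \<in> carrier_mat (d i) (d i)"
    using minus_carrier_mat[OF dsA_D(1)[OF b i]] i by (simp add: dsMinus_def)
qed (auto simp add: dsMinus_def)

lemma dsSmult_A: "a \<in> dsA k d \<Longrightarrow> dsSmult k c a \<in> dsA k d"
  by (rule dsA_I) (auto simp: dsSmult_def dest: dsA_D)

lemma dsOne_A: "dsOne k d \<in> dsA k d"
  by (rule dsA_I) (auto simp: dsOne_def)

lemma dsE_A: "dsE k d i j l \<in> dsA k d"
  by (rule dsA_I) (auto simp: dsE_def unitm_def)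

lemma dsPow_A: "a \<in> dsA k d \<Longrightarrow> dsPow k a n \<in> dsA k d"
  by (rule dsA_I) (auto simp: dsPow_def dest: dsA_D)

lemma dsSum_A: "set ys \<subseteq> dsA k d \<Longrightarrow> dsSum k d ys \<in> dsA k d"
  unfolding dsSum_def by (induction ys) (auto intro: dsAdd_A dsSmult_A dsOne_A)

lemma dsMult_entry:
  assumes "a \<in> dsA k d" "b \<in> dsA k d" "i \<in> {1..k}" "r < d i" "s < d i"
  shows "dsMult k a b i $$ (r,s) = (\<Sum>t<d i. a i $$ (r,t) * b i $$ (t,s))"
  using assms dsA_dims[OF assms(1,3)] dsA_dims[OF assms(2,3)]
  by (simp add: dsMult_def scalar_prod_def lessThan_atLeast0 ac_simps)

lemma dsAdd_entry:
  assumes "a \<in> dsA k d" "b \<in> dsA k d" "i \<in> {1..k}" "r < d i" "s < d i"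
  shows "dsAdd k a b i $$ (r,s) = a i $$ (r,s) + b i $$ (r,s)"
  using assms dsA_dims[OF assms(1,3)] dsA_dims[OF assms(2,3)]
  by (simp add: dsAdd_def)

lemma dsMinus_entry:
  assumes "a \<in> dsA k d" "b \<in> dsA k d" "i \<in> {1..k}" "r < d i" "s < d i"
  shows "dsMinus k a b i $$ (r,s) = a i $$ (r,s) - b i $$ (r,s)"
  using assms dsA_dims[OF assms(1,3)] dsA_dims[OF assms(2,3)]
  by (simp add: dsMinus_def)

lemma dsSmult_entry:
  assumes "a \<in> dsA k d" "i \<in> {1..k}" "r < d i" "s < d i"
  shows "dsSmult k c a i $$ (r,s) = c * a i $$ (r,s)"
  using assms dsA_dims[OF assms(1,2)]
  by (simp add: dsSmult_def)

lemma dsOne_entry: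
  assumes "i \<in> {1..k}" "r < d i" "s < d i"
  shows "dsOne k d i $$ (r,s) = (if r = s then 1 else 0)"
  using assms by (simp add: dsOne_def)

lemma dsE_entry:
  assumes "i \<in> {1..k}" "r < d i" "s < d i"
  shows "dsE k d i' j l i $$ (r,s) = (if i' = i \<and> j = r \<and> l = s then 1 else 0)"
  using assms by (auto simp: dsE_def unitm_def)

lemma dsSum_entry:
  assumes "set ys \<subseteq> dsA k d" "i \<in> {1..k}" "r < d i" "s < d i"
  shows "dsSum k d ys i $$ (r,s) = sum_list (map (\<lambda>y. y i $$ (r,s)) ys)"
  using assms(1)
proof (induction ys)
  case Nil
  then show ?case using assms(2-4) dsSmult_entry[OF dsOne_A, of i r s 0]
    by (simp add: dsSum_def)
next
  case (Cons y ys)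
  have "dsSum k d (y # ys) = dsAdd k y (dsSum k d ys)" by (simp add: dsSum_def)
  then show ?case using Cons assms(2-4) dsAdd_entry[of y "dsSum k d ys" i r s] dsSum_A[of ys]
    by simp
qed

lemma eps0_A:
  assumes "c \<in> dsA k d"
  shows "eps0 k d c = (\<Sum>i\<in>{1..k}. of_nat (d i) * (\<Sum>r<d i. c i $$ (r,r)))"
  unfolding eps0_def mtrace_def
  by (rule sum.cong) (use dsA_dims[OF assms] in auto)

lemma linear_dsSum:
  assumes "dsLinear k d \<phi>" "set ys \<subseteq> dsA k d"
  shows "\<phi> (dsSum k d ys) = sum_list (map \<phi> ys)"
  using assms(2)
proof (induction ys)
  case Nil
  have "\<phi> (dsSmult k 0 (dsOne k d)) = 0 * \<phi> (dsOne k d)"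
    using assms(1) dsOne_A unfolding dsLinear_def by blast
  then show ?case by (simp add: dsSum_def)
next
  case (Cons y ys)
  have "dsSum k d (y # ys) = dsAdd k y (dsSum k d ys)" by (simp add: dsSum_def)
  moreover have "\<phi> (dsAdd k y (dsSum k d ys)) = \<phi> y + \<phi> (dsSum k d ys)"
    using Cons(2) assms(1) dsSum_A[of ys] unfolding dsLinear_def by simp
  ultimately show ?case using Cons by simp
qed


definition Tset :: "nat \<Rightarrow> (nat \<Rightarrow> nat) \<Rightarrow> (nat \<times> nat \<times> nat) set" where
  "Tset k' d' = (SIGMA i:{1..k'}. {..<d' i} \<times> {..<d' i})"

lemma finite_Tset: "finite (Tset k d)"
  unfolding Tset_def by (intro finite_SigmaI) auto

lemma sum_Tset: "(\<Sum>p\<in>Tset k d. g p) = (\<Sum>i\<in>{1..k}. \<Sum>j<d i. \<Sum>l<d i. g (i,j,l))"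
proof -
  have "(\<Sum>p\<in>Tset k d. g p) = (\<Sum>i\<in>{1..k}. \<Sum>q\<in>{..<d i} \<times> {..<d i}. g (i,q))"
    unfolding Tset_def by (subst sum.Sigma) (auto simp: split_def)
  also have "\<dots> = (\<Sum>i\<in>{1..k}. \<Sum>j<d i. \<Sum>l<d i. g (i,j,l))"
    by (intro sum.cong refl) (simp add: sum.cartesian_product split_def)
  finally show ?thesis .
qed

lemma dsA_expand:
  assumes x: "x \<in> dsA k d" and xs: "distinct xs" "set xs = Tset k d"
  shows "x = dsSum k d (map (\<lambda>(i,j,l). dsSmult k (x i $$ (j,l)) (dsE k d i j l)) xs)"
    (is "_ = dsSum k d (map ?f xs)")
proof (rule A_eqI[OF x dsSum_A])
  show ss: "set (map ?f xs) \<subseteq> dsA k d" by (auto intro!: dsSmult_A dsE_A)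
  fix i r s assume i: "i \<in> {1..k}" and r: "r < d i" and s: "s < d i"
  have "dsSum k d (map ?f xs) i $$ (r,s) = sum_list (map (\<lambda>y. y i $$ (r,s)) (map ?f xs))"
    by (rule dsSum_entry[OF ss i r s])
  also have "\<dots> = (\<Sum>p\<in>Tset k d. ?f p i $$ (r,s))"
    using xs by (simp add: sum_list_distinct_conv_sum_set)
  also have "\<dots> = (\<Sum>p\<in>Tset k d. if p = (i,r,s) then x i $$ (r,s) else 0)"
    by (rule sum.cong) (auto simp: dsSmult_entry[OF dsE_A i r s] dsE_entry[OF i r s] split: if_splits)
  also have "\<dots> = x i $$ (r,s)" using i r s by (simp add: Tset_def finite_Tset)
  finally show "x i $$ (r,s) = dsSum k d (map ?f xs) i $$ (r,s)" by simp
qed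

lemma linear_expand:
  assumes lin: "dsLinear k d \<phi>" and x: "x \<in> dsA k d"
  shows "\<phi> x = (\<Sum>i\<in>{1..k}. \<Sum>j<d i. \<Sum>l<d i. x i $$ (j,l) * \<phi> (dsE k d i j l))"
proof -
  obtain xs where xs: "set xs = Tset k d" "distinct xs"
    using finite_distinct_list[OF finite_Tset] by blast
  let ?f = "\<lambda>(i,j,l). dsSmult k (x i $$ (j,l)) (dsE k d i j l)"
  have ss: "set (map ?f xs) \<subseteq> dsA k d" by (auto intro!: dsSmult_A dsE_A)
  have lin_smult: "\<And>c a. a \<in> dsA k d \<Longrightarrow> \<phi> (dsSmult k c a) = c * \<phi> a"
    using lin by (simp add: dsLinear_def)
  have "\<phi> x = \<phi> (dsSum k d (map ?f xs))"
    using dsA_expand[OF x xs(2,1)] by simp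
  also have "\<dots> = sum_list (map \<phi> (map ?f xs))" by (rule linear_dsSum[OF lin ss])
  also have "\<dots> = (\<Sum>p\<in>Tset k d. \<phi> (?f p))"
    using xs by (simp add: sum_list_distinct_conv_sum_set)
  also have "\<dots> = (\<Sum>p\<in>Tset k d. (case p of (i,j,l) \<Rightarrow> x i $$ (j,l) * \<phi> (dsE k d i j l)))"
    by (rule sum.cong) (auto simp: lin_smult dsE_A)
  also have "\<dots> = (\<Sum>i\<in>{1..k}. \<Sum>j<d i. \<Sum>l<d i. x i $$ (j,l) * \<phi> (dsE k d i j l))"
    by (simp add: sum_Tset)
  finally show ?thesis .
qed

lemma eps0_mult:
  assumes x: "x \<in> dsA k d" and y: "y \<in> dsA k d"
  shows "eps0 k d (dsMult k x y) = (\<Sum>i\<in>{1..k}. of_nat (d i) * (\<Sum>r<d i. \<Sum>t<d i. x i $$ (r,t) * y i $$ (t,r)))"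
  unfolding eps0_A[OF dsMult_A[OF x y]]
  by (rule sum.cong) (auto simp: dsMult_entry[OF x y])

lemma eps0_comm:
  assumes x: "x \<in> dsA k d" and y: "y \<in> dsA k d"
  shows "eps0 k d (dsMult k x y) = eps0 k d (dsMult k y x)"
  unfolding eps0_mult[OF x y] eps0_mult[OF y x]
  by (rule sum.cong[OF refl]) (subst sum.swap, simp add: mult.commute)

lemma dsMult_assoc:
  assumes x: "x \<in> dsA k d" and y: "y \<in> dsA k d" and z: "z \<in> dsA k d"
  shows "dsMult k (dsMult k x y) z = dsMult k x (dsMult k y z)"
proof
  fix i show "dsMult k (dsMult k x y) z i = dsMult k x (dsMult k y z) i"
    using assoc_mult_mat[OF dsA_D(1)[OF x] dsA_D(1)[OF y] dsA_D(1)[OF z], of i]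
    by (simp add: dsMult_def)
qed

lemma dsMult_one_left:
  assumes x: "x \<in> dsA k d"
  shows "dsMult k (dsOne k d) x = x"
proof
  fix i show "dsMult k (dsOne k d) x i = x i"
    using left_mult_one_mat[OF dsA_D(1)[OF x, of i]] dsA_D(2)[OF x, of i]
    by (simp add: dsMult_def dsOne_def)
qed

lemma dsMult_one_right:
  assumes x: "x \<in> dsA k d"
  shows "dsMult k x (dsOne k d) = x"
proof
  fix i show "dsMult k x (dsOne k d) i = x i"
    using right_mult_one_mat[OF dsA_D(1)[OF x, of i]] dsA_D(2)[OF x, of i]
    by (simp add: dsMult_def dsOne_def)
qed

lemma eps0_mult_E:
  assumes c: "c \<in> dsA k d" and i: "i \<in> {1..k}" and j: "j < d i" and l: "l < d i"
  shows "eps0 k d (dsMult k c (dsE k d i j l)) = of_nat (d i) * c i $$ (l,j)"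
proof -
  have "eps0 k d (dsMult k c (dsE k d i j l)) =
     (\<Sum>i'\<in>{1..k}. of_nat (d i') * (\<Sum>r<d i'. \<Sum>t<d i'. c i' $$ (r,t) * dsE k d i j l i' $$ (t,r)))"
    by (rule eps0_mult[OF c dsE_A])
  also have "\<dots> = (\<Sum>i'\<in>{1..k}. if i' = i then of_nat (d i) * c i $$ (l,j) else 0)"
  proof (rule sum.cong[OF refl])
    fix i' assume i': "i' \<in> {1..k}"
    have "(\<Sum>r<d i'. \<Sum>t<d i'. c i' $$ (r,t) * dsE k d i j l i' $$ (t,r))
        = (\<Sum>r<d i'. \<Sum>t<d i'. if i = i' \<and> t = j \<and> r = l then c i' $$ (r,t) else 0)"
      by (intro sum.cong refl) (simp add: dsE_entry[OF i'])
    also have "\<dots> = (\<Sum>r<d i'. if r = l \<and> i = i' then (\<Sum>t<d i'. if t = j then c i' $$ (r,t) else 0) else 0)"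
      by (intro sum.cong refl) auto
    also have "\<dots> = (\<Sum>r<d i'. if r = l \<and> i = i' then c i' $$ (l,j) else 0)"
      using j l by (intro sum.cong refl) auto
    also have "\<dots> = (if i' = i then c i $$ (l,j) else 0)"
      using j l by (cases "i = i'") auto
    finally show "of_nat (d i') * (\<Sum>r<d i'. \<Sum>t<d i'. c i' $$ (r,t) * dsE k d i j l i' $$ (t,r))
        = (if i' = i then of_nat (d i) * c i $$ (l,j) else 0)" by simp
  qed
  also have "\<dots> = of_nat (d i) * c i $$ (l,j)" using i by simp
  finally show ?thesis .
qed

lemma eps0_E_mult:
  assumes c: "c \<in> dsA k d" and i: "i \<in> {1..k}" and j: "j < d i" and l: "l < d i"
  shows "eps0 k d (dsMult k (dsE k d i j l) c) = of_nat (d i) * c i $$ (l,j)"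
  using eps0_comm[OF dsE_A c] eps0_mult_E[OF c i j l] by simp

lemma dsMult_E_entry:
  assumes c: "c \<in> dsA k d" and i: "i \<in> {1..k}" and r: "r < d i" and s: "s < d i" and l: "l < d i'"
  shows "dsMult k c (dsE k d i' l j) i $$ (r,s) = (if i' = i \<and> s = j then c i $$ (r,l) else 0)"
proof -
  have "dsMult k c (dsE k d i' l j) i $$ (r,s) = (\<Sum>t<d i. c i $$ (r,t) * dsE k d i' l j i $$ (t,s))"
    by (rule dsMult_entry[OF c dsE_A i r s])
  also have "\<dots> = (\<Sum>t<d i. if i' = i \<and> s = j \<and> t = l then c i $$ (r,t) else 0)"
    by (intro sum.cong refl) (auto simp: dsE_entry[OF i _ s])
  also have "\<dots> = (if i' = i \<and> s = j then c i $$ (r,l) else 0)"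
    using l by (cases "i' = i \<and> s = j") auto
  finally show ?thesis .
qed


lemma sum_T_delta:
  assumes i: "i \<in> {1..k}" and s: "s < d i"
  shows "(\<Sum>i'\<in>{1..k}. \<Sum>j<d i'. \<Sum>l<d i'. if i' = i \<and> j = s then f l else 0) = (\<Sum>l<d i. f l)"
proof -
  have pw: "\<And>i' j. (\<Sum>l<d i'. if i' = i \<and> j = s then f l else 0) = (if i' = i then (if j = s then (\<Sum>l<d i'. f l) else 0) else 0)"
    by auto
  have "(\<Sum>i'\<in>{1..k}. \<Sum>j<d i'. \<Sum>l<d i'. if i' = i \<and> j = s then f l else 0)
      = (\<Sum>i'\<in>{1..k}. \<Sum>j<d i'. (if i' = i then (if j = s then (\<Sum>l<d i'. f l) else 0) else 0))"
    by (simp only: pw)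
  also have "\<dots> = (\<Sum>i'\<in>{1..k}. if i' = i then (\<Sum>j<d i'. if j = s then (\<Sum>l<d i'. f l) else 0) else 0)"
    by (intro sum.cong refl) auto
  also have "\<dots> = (\<Sum>j<d i. if j = s then (\<Sum>l<d i. f l) else 0)"
    using i by (simp only: sum.delta[OF finite_atLeastAtMost] if_True)
  also have "\<dots> = (\<Sum>l<d i. f l)"
    using s by (simp only: sum.delta[OF finite_lessThan] lessThan_iff if_True)
  finally show ?thesis .
qed

lemma sum_list_sum_swap:
  "sum_list (map (\<lambda>p. \<Sum>t\<in>S. f p t) xs) = (\<Sum>t\<in>S. sum_list (map (\<lambda>p. f p t) xs))"
  by (induction xs) (simp_all add: sum.distrib)

lemma mtrace_smult: "M \<in> carrier_mat n n \<Longrightarrow> mtrace (c \<cdot>\<^sub>m M) = c * mtrace (M :: 'a::comm_ring_1 mat)"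
  unfolding mtrace_def by (auto simp: sum_distrib_left)

lemma pow_smult_one: "(c \<cdot>\<^sub>m 1\<^sub>m n) ^\<^sub>m j = (c ^ j) \<cdot>\<^sub>m (1\<^sub>m n :: 'a::comm_ring_1 mat)"
proof (induction j)
  case 0 then show ?case by (auto intro!: eq_matI)
next
  case (Suc j)
  have "(c \<cdot>\<^sub>m 1\<^sub>m n) ^\<^sub>m Suc j = (c ^ j \<cdot>\<^sub>m 1\<^sub>m n) * (c \<cdot>\<^sub>m 1\<^sub>m n)" using Suc by simp
  also have "\<dots> = c ^ j \<cdot>\<^sub>m (1\<^sub>m n * (c \<cdot>\<^sub>m 1\<^sub>m n))"
    by (rule mult_smult_assoc_mat) auto
  also have "\<dots> = (c ^ Suc j) \<cdot>\<^sub>m (1\<^sub>m n :: 'a mat)"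
    by (rule eq_matI) auto
  finally show ?case .
qed

end

definition uF :: "nat \<Rightarrow> (nat \<Rightarrow> nat) \<Rightarrow> ((nat \<Rightarrow> 'a::field mat) \<Rightarrow> (nat \<Rightarrow> 'a mat) \<Rightarrow> 'a) \<Rightarrow> nat \<Rightarrow> 'a mat" where
  "uF k d B = (\<lambda>i. if i \<in> {1..k} then mat (d i) (d i) (\<lambda>(r,s). frob_eps k d B (dsE k d i s r) / of_nat (d i)) else 0\<^sub>m 0 0)"

definition vF :: "nat \<Rightarrow> (nat \<Rightarrow> nat) \<Rightarrow> ((nat \<Rightarrow> 'a::field mat) \<Rightarrow> (nat \<Rightarrow> 'a mat) \<Rightarrow> 'a) \<Rightarrow> nat \<Rightarrow> 'a mat" where
  "vF k d B = (SOME v. v \<in> dsA k d \<and> (\<forall>b\<in>dsA k d. B v b = eps0 k d b))"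

definition LF :: "nat \<Rightarrow> (nat \<Rightarrow> nat) \<Rightarrow> (nat \<Rightarrow> 'a::field mat) \<Rightarrow> nat \<Rightarrow> 'a mat" where
  "LF k d v = (\<lambda>i. if i \<in> {1..k} then (mtrace (v i) / of_nat (d i)) \<cdot>\<^sub>m 1\<^sub>m (d i) else 0\<^sub>m 0 0)"

context
  fixes k :: nat and d :: "nat \<Rightarrow> nat" and B :: "(nat \<Rightarrow> 'a::field_char_0 mat) \<Rightarrow> (nat \<Rightarrow> 'a mat) \<Rightarrow> 'a"
  assumes dpos: "\<forall>i\<in>{1..k}. 0 < d i"
    and frob: "frobenius_form k d B"
begin

lemma dnz: "i \<in> {1..k} \<Longrightarrow> (of_nat (d i) :: 'a) \<noteq> 0"
  using dpos by auto

lemma eps_lin: "dsLinear k d (frob_eps k d B)"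
  using frob dsOne_A unfolding frobenius_form_def frob_eps_def by blast

lemma B_lin1: "b \<in> dsA k d \<Longrightarrow> a \<in> dsA k d \<Longrightarrow> B (dsSmult k c a) b = c * B a b"
  using frob unfolding frobenius_form_def dsLinear_def by blast

lemma B_eps: "a \<in> dsA k d \<Longrightarrow> b \<in> dsA k d \<Longrightarrow> B a b = frob_eps k d B (dsMult k a b)"
  using frob dsOne_A dsMult_one_left[of a k d] unfolding frobenius_form_def frob_eps_def by metis

lemma uF_A: "uF k d B \<in> dsA k d"
  by (rule dsA_I) (auto simp: uF_def)

lemma eps_u:
  assumes x: "x \<in> dsA k d"
  shows "frob_eps k d B x = eps0 k d (dsMult k (uF k d B) x)"
proof -
  let ?e = "\<lambda>i j l. frob_eps k d B (dsE k d i j l)"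
  have "frob_eps k d B x = (\<Sum>i\<in>{1..k}. \<Sum>j<d i. \<Sum>l<d i. x i $$ (j,l) * ?e i j l)"
    by (rule linear_expand[OF eps_lin x])
  also have "\<dots> = (\<Sum>i\<in>{1..k}. of_nat (d i) * (\<Sum>r<d i. \<Sum>t<d i. uF k d B i $$ (r,t) * x i $$ (t,r)))"
  proof (rule sum.cong[OF refl])
    fix i assume i: "i \<in> {1..k}"
    have "of_nat (d i) * (\<Sum>r<d i. \<Sum>t<d i. uF k d B i $$ (r,t) * x i $$ (t,r))
        = (\<Sum>r<d i. \<Sum>t<d i. of_nat (d i) * (?e i t r / of_nat (d i)) * x i $$ (t,r))"
      using i by (simp add: uF_def sum_distrib_left mult.assoc)
    also have "\<dots> = (\<Sum>r<d i. \<Sum>t<d i. x i $$ (t,r) * ?e i t r)"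
      using dnz[OF i] by (simp add: mult.commute)
    also have "\<dots> = (\<Sum>j<d i. \<Sum>l<d i. x i $$ (j,l) * ?e i j l)"
      by (rule sum.swap)
    finally show "(\<Sum>j<d i. \<Sum>l<d i. x i $$ (j,l) * ?e i j l) = of_nat (d i) * (\<Sum>r<d i. \<Sum>t<d i. uF k d B i $$ (r,t) * x i $$ (t,r))"
      by simp
  qed
  also have "\<dots> = eps0 k d (dsMult k (uF k d B) x)"
    by (rule eps0_mult[OF uF_A x, symmetric])
  finally show ?thesis .
qed

lemma B_u: "a \<in> dsA k d \<Longrightarrow> b \<in> dsA k d \<Longrightarrow> B a b = eps0 k d (dsMult k (uF k d B) (dsMult k a b))"
  using B_eps eps_u dsMult_A by metis

lemma eps0_lin: "dsLinear k d (eps0 k d :: (nat \<Rightarrow> 'a mat) \<Rightarrow> 'a)"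
  unfolding dsLinear_def
proof (intro conjI ballI allI)
  fix a b :: "nat \<Rightarrow> 'a mat" assume a: "a \<in> dsA k d" and b: "b \<in> dsA k d"
  show "eps0 k d (dsAdd k a b) = eps0 k d a + eps0 k d b"
    unfolding eps0_A[OF dsAdd_A[OF a b]] eps0_A[OF a] eps0_A[OF b] sum.distrib[symmetric]
    by (intro sum.cong refl) (simp add: dsAdd_entry[OF a b] sum.distrib distrib_left)
next
  fix c :: 'a and a :: "nat \<Rightarrow> 'a mat" assume a: "a \<in> dsA k d"
  show "eps0 k d (dsSmult k c a) = c * eps0 k d a"
    unfolding eps0_A[OF dsSmult_A[OF a]] eps0_A[OF a] sum_distrib_left
    by (intro sum.cong refl) (simp add: dsSmult_entry[OF a] sum_distrib_left algebra_simps)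
qed

lemma vF_prop: "vF k d B \<in> dsA k d \<and> (\<forall>b\<in>dsA k d. B (vF k d B) b = eps0 k d b)"
proof -
  have "\<exists>v. v \<in> dsA k d \<and> (\<forall>b\<in>dsA k d. B v b = eps0 k d b)"
    using frob eps0_lin unfolding frobenius_form_def by blast
  then show ?thesis unfolding vF_def by (rule someI_ex)
qed

lemma vF_A: "vF k d B \<in> dsA k d" using vF_prop by blast

lemma uv_block:
  assumes i: "i \<in> {1..k}"
  shows "uF k d B i * vF k d B i = 1\<^sub>m (d i)"
proof (rule eq_matI)
  let ?u = "uF k d B" and ?v = "vF k d B"
  fix l j assume l0: "l < dim_row (1\<^sub>m (d i) :: 'a mat)" and j0: "j < dim_col (1\<^sub>m (d i) :: 'a mat)"
  then have l: "l < d i" and j: "j < d i" by auto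
  have "of_nat (d i) * dsMult k ?u ?v i $$ (l,j) = eps0 k d (dsMult k (dsMult k ?u ?v) (dsE k d i j l))"
    by (rule eps0_mult_E[OF dsMult_A[OF uF_A vF_A] i j l, symmetric])
  also have "\<dots> = B ?v (dsE k d i j l)"
    using B_u[OF vF_A dsE_A] dsMult_assoc[OF uF_A vF_A dsE_A] by simp
  also have "\<dots> = eps0 k d (dsE k d i j l)" using vF_prop dsE_A by blast
  also have "\<dots> = eps0 k d (dsMult k (dsOne k d) (dsE k d i j l))" by (metis dsMult_one_left dsE_A)
  also have "\<dots> = of_nat (d i) * dsOne k d i $$ (l,j)" by (rule eps0_mult_E[OF dsOne_A[of k d] i j l])
  finally have "dsMult k ?u ?v i $$ (l,j) = dsOne k d i $$ (l,j)" using dnz[OF i] by simp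
  then show "(?u i * ?v i) $$ (l,j) = 1\<^sub>m (d i) $$ (l,j)"
    using i l j by (simp add: dsMult_def dsOne_def)
qed (use i uF_A vF_A in \<open>auto dest: dsA_dims\<close>)

lemma vu_block:
  assumes i: "i \<in> {1..k}"
  shows "vF k d B i * uF k d B i = 1\<^sub>m (d i)"
  by (rule mat_mult_left_right_inverse[OF dsA_D(1)[OF uF_A i] dsA_D(1)[OF vF_A i] uv_block[OF i]])

lemma uv: "dsMult k (uF k d B) (vF k d B) = dsOne k d"
  by (rule ext) (simp add: dsMult_def dsOne_def uv_block)

lemma vu: "dsMult k (vF k d B) (uF k d B) = dsOne k d"
  by (rule ext) (simp add: dsMult_def dsOne_def vu_block)


lemma B_E_right:
  assumes a: "a \<in> dsA k d" and i: "i \<in> {1..k}" and j: "j < d i" and l: "l < d i"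
  shows "B a (dsE k d i j l) = of_nat (d i) * dsMult k (uF k d B) a i $$ (l,j)"
proof -
  have "B a (dsE k d i j l) = eps0 k d (dsMult k (uF k d B) (dsMult k a (dsE k d i j l)))"
    by (rule B_u[OF a dsE_A])
  also have "\<dots> = eps0 k d (dsMult k (dsMult k (uF k d B) a) (dsE k d i j l))"
    by (simp add: dsMult_assoc[OF uF_A a dsE_A])
  also have "\<dots> = of_nat (d i) * dsMult k (uF k d B) a i $$ (l,j)"
    by (rule eps0_mult_E[OF dsMult_A[OF uF_A a] i j l])
  finally show ?thesis .
qed

lemma B_vE_left:
  assumes a: "a \<in> dsA k d" and i: "i \<in> {1..k}" and j: "j < d i" and l: "l < d i"
  shows "B (dsMult k (vF k d B) (dsE k d i l j)) a = of_nat (d i) * a i $$ (j,l)"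
proof -
  let ?u = "uF k d B" and ?v = "vF k d B" and ?E = "dsE k d i l j"
  have e1: "dsMult k ?u (dsMult k (dsMult k ?v ?E) a) = dsMult k (dsMult k ?u (dsMult k ?v ?E)) a"
    by (rule dsMult_assoc[OF uF_A dsMult_A[OF vF_A dsE_A] a, symmetric])
  have e2: "dsMult k ?u (dsMult k ?v ?E) = dsMult k (dsMult k ?u ?v) ?E"
    by (rule dsMult_assoc[OF uF_A vF_A dsE_A, symmetric])
  have e3: "dsMult k (dsMult k ?u ?v) ?E = ?E" by (simp add: uv dsMult_one_left dsE_A)
  have "B (dsMult k ?v ?E) a = eps0 k d (dsMult k ?u (dsMult k (dsMult k ?v ?E) a))"
    by (rule B_u[OF dsMult_A[OF vF_A dsE_A] a])
  also have "\<dots> = eps0 k d (dsMult k ?E a)" unfolding e1 e2 e3 ..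
  also have "\<dots> = of_nat (d i) * a i $$ (j,l)"
    by (rule eps0_E_mult[OF a i l j])
  finally show ?thesis .
qed

lemma copairing_exists: "\<exists>gs. is_copairing k d B gs"
proof -
  obtain xs where xs: "set xs = Tset k d" "distinct xs"
    using finite_distinct_list[OF finite_Tset] by blast
  let ?u = "uF k d B" and ?v = "vF k d B"
  let ?gs = "map (\<lambda>(i,j,l). (dsE k d i j l, dsSmult k (1 / of_nat (d i)) (dsMult k ?v (dsE k d i l j)))) xs"
  have mem: "\<forall>p\<in>set ?gs. fst p \<in> dsA k d \<and> snd p \<in> dsA k d"
    by (auto intro!: dsE_A dsSmult_A dsMult_A vF_A)
  have pa: "dsSum k d (map (\<lambda>p. dsSmult k (B a (fst p)) (snd p)) ?gs) = a" if a: "a \<in> dsA k d" for a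
  proof -
    let ?ys = "map (\<lambda>p. dsSmult k (B a (fst p)) (snd p)) ?gs"
    have ys: "set ?ys \<subseteq> dsA k d" using mem by (auto intro!: dsSmult_A)
    show ?thesis
    proof (rule A_eqI[OF dsSum_A[OF ys] a])
      fix i r s assume i: "i \<in> {1..k}" and r: "r < d i" and s: "s < d i"
      have pw: "B a (dsE k d i' j l) * ((1 / of_nat (d i')) * dsMult k ?v (dsE k d i' l j) i $$ (r,s))
         = (if i' = i \<and> j = s then ?v i $$ (r,l) * dsMult k ?u a i $$ (l,s) else 0)"
        if p: "(i',j,l) \<in> Tset k d" for i' j l
      proof -
        from p have i': "i' \<in> {1..k}" and j: "j < d i'" and l: "l < d i'" by (auto simp: Tset_def)
        show ?thesis
          unfolding B_E_right[OF a i' j l] dsMult_E_entry[OF vF_A i r s l]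
          using dnz[OF i'] by auto
      qed
      have "dsSum k d ?ys i $$ (r,s) = sum_list (map (\<lambda>y. y i $$ (r,s)) ?ys)"
        by (rule dsSum_entry[OF ys i r s])
      also have "\<dots> = (\<Sum>p\<in>Tset k d. case p of (i',j,l) \<Rightarrow>
            B a (dsE k d i' j l) * ((1 / of_nat (d i')) * dsMult k ?v (dsE k d i' l j) i $$ (r,s)))"
        using xs
        by (simp add: sum_list_distinct_conv_sum_set split_def
             dsSmult_entry[OF dsSmult_A[OF dsMult_A[OF vF_A dsE_A]] i r s]
             dsSmult_entry[OF dsMult_A[OF vF_A dsE_A] i r s])
      also have "\<dots> = (\<Sum>p\<in>Tset k d. case p of (i',j,l) \<Rightarrow>
            (if i' = i \<and> j = s then ?v i $$ (r,l) * dsMult k ?u a i $$ (l,s) else 0))"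
      proof (rule sum.cong[OF refl])
        fix p assume pT: "p \<in> Tset k d"
        obtain i' j l where p: "p = (i',j,l)" by (cases p)
        show "(case p of (i',j,l) \<Rightarrow>
            B a (dsE k d i' j l) * ((1 / of_nat (d i')) * dsMult k ?v (dsE k d i' l j) i $$ (r,s))) =
            (case p of (i',j,l) \<Rightarrow>
            (if i' = i \<and> j = s then ?v i $$ (r,l) * dsMult k ?u a i $$ (l,s) else 0))"
          unfolding p prod.case by (rule pw) (use pT p in simp)
      qed
      also have "\<dots> = (\<Sum>l<d i. ?v i $$ (r,l) * dsMult k ?u a i $$ (l,s))"
        unfolding sum_Tset prod.case by (rule sum_T_delta[where k=k and d=d, OF i s])
      also have "\<dots> = dsMult k ?v (dsMult k ?u a) i $$ (r,s)"
        by (rule dsMult_entry[OF vF_A dsMult_A[OF uF_A a] i r s, symmetric])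
      also have "dsMult k ?v (dsMult k ?u a) = a"
        using dsMult_assoc[OF vF_A uF_A a] vu dsMult_one_left[OF a] by simp
      finally show "dsSum k d ?ys i $$ (r,s) = a i $$ (r,s)" by simp
    qed
  qed
  have pb: "dsSum k d (map (\<lambda>p. dsSmult k (B (snd p) a) (fst p)) ?gs) = a" if a: "a \<in> dsA k d" for a
  proof -
    have meq: "map (\<lambda>p. dsSmult k (B (snd p) a) (fst p)) ?gs
        = map (\<lambda>(i,j,l). dsSmult k (a i $$ (j,l)) (dsE k d i j l)) xs"
    proof (unfold map_map, rule map_cong[OF refl])
      fix p assume "p \<in> set xs"
      then have pT: "p \<in> Tset k d" using xs by simp
      obtain i j l where p: "p = (i,j,l)" by (cases p)
      have i: "i \<in> {1..k}" and j: "j < d i" and l: "l < d i" using pT unfolding p by (auto simp: Tset_def)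
      have "B (dsSmult k (1 / of_nat (d i)) (dsMult k ?v (dsE k d i l j))) a
          = (1 / of_nat (d i)) * B (dsMult k ?v (dsE k d i l j)) a"
        by (rule B_lin1[OF a dsMult_A[OF vF_A dsE_A]])
      also have "\<dots> = a i $$ (j,l)"
        unfolding B_vE_left[OF a i j l] using dnz[OF i] by simp
      finally show "((\<lambda>p. dsSmult k (B (snd p) a) (fst p)) \<circ>
          (\<lambda>(i,j,l). (dsE k d i j l, dsSmult k (1 / of_nat (d i)) (dsMult k ?v (dsE k d i l j))))) p
          = (\<lambda>(i,j,l). dsSmult k (a i $$ (j,l)) (dsE k d i j l)) p"
        using p by simp
    qed
    show ?thesis unfolding meq by (rule dsA_expand[OF a xs(2,1), symmetric])
  qed
  have "is_copairing k d B ?gs"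
    unfolding is_copairing_def using mem pa pb by blast
  then show ?thesis by blast
qed


lemma B_E_left:
  assumes g: "g \<in> dsA k d" and i: "i \<in> {1..k}" and j: "j < d i" and l: "l < d i"
  shows "B (dsE k d i j l) g = of_nat (d i) * dsMult k g (uF k d B) i $$ (l,j)"
proof -
  let ?u = "uF k d B" and ?E = "dsE k d i j l"
  have "B ?E g = eps0 k d (dsMult k ?u (dsMult k ?E g))" by (rule B_u[OF dsE_A g])
  also have "\<dots> = eps0 k d (dsMult k (dsMult k ?u ?E) g)"
    by (simp add: dsMult_assoc[OF uF_A dsE_A g])
  also have "\<dots> = eps0 k d (dsMult k g (dsMult k ?u ?E))"
    by (rule eps0_comm[OF dsMult_A[OF uF_A dsE_A] g])
  also have "\<dots> = eps0 k d (dsMult k (dsMult k g ?u) ?E)"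
    by (simp add: dsMult_assoc[OF g uF_A dsE_A])
  also have "\<dots> = of_nat (d i) * dsMult k g ?u i $$ (l,j)"
    by (rule eps0_mult_E[OF dsMult_A[OF g uF_A] i j l])
  finally show ?thesis .
qed

lemma LF_A: "LF k d (vF k d B) \<in> dsA k d"
  by (rule dsA_I) (auto simp: LF_def)

lemma copairing_ell:
  assumes gs: "is_copairing k d B gs"
  shows "dsSum k d (map (\<lambda>p. dsMult k (fst p) (snd p)) gs) = LF k d (vF k d B)"
proof -
  let ?u = "uF k d B" and ?v = "vF k d B"
  have mem: "\<And>p. p \<in> set gs \<Longrightarrow> fst p \<in> dsA k d \<and> snd p \<in> dsA k d"
    using gs unfolding is_copairing_def by blast
  have pa: "\<And>a. a \<in> dsA k d \<Longrightarrow> dsSum k d (map (\<lambda>p. dsSmult k (B a (fst p)) (snd p)) gs) = a"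
    using gs unfolding is_copairing_def by blast
  have ys: "set (map (\<lambda>p. dsMult k (fst p) (snd p)) gs) \<subseteq> dsA k d"
    using mem by (auto intro!: dsMult_A)
  show ?thesis
  proof (rule A_eqI[OF dsSum_A[OF ys] LF_A])
    fix i r s assume i: "i \<in> {1..k}" and r: "r < d i" and s: "s < d i"
    let ?G = "\<lambda>p j. dsMult k (fst p) ?u i $$ (r,j)"
    have key: "sum_list (map (\<lambda>p. ?G p j * snd p i $$ (m,s)) gs) = (if j = m \<and> r = s then 1 / of_nat (d i) else 0)"
      if j: "j < d i" and m: "m < d i" for j m
    proof -
      let ?E = "dsE k d i j r"
      let ?zs = "map (\<lambda>p. dsSmult k (B ?E (fst p)) (snd p)) gs"
      have zs: "set ?zs \<subseteq> dsA k d" using mem by (auto intro!: dsSmult_A)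
      have "(if j = m \<and> r = s then 1 else 0) = ?E i $$ (m,s)"
        using dsE_entry[where k=k and d=d, OF i m s, of i j r] by auto
      also have "\<dots> = dsSum k d ?zs i $$ (m,s)" using pa[OF dsE_A] by simp
      also have "\<dots> = sum_list (map (\<lambda>y. y i $$ (m,s)) ?zs)" by (rule dsSum_entry[OF zs i m s])
      also have "\<dots> = sum_list (map (\<lambda>p. of_nat (d i) * (?G p j * snd p i $$ (m,s))) gs)"
        unfolding map_map
      proof (rule arg_cong[where f=sum_list], rule map_cong[OF refl])
        fix p assume p: "p \<in> set gs"
        show "((\<lambda>y. y i $$ (m,s)) \<circ> (\<lambda>p. dsSmult k (B ?E (fst p)) (snd p))) p
            = of_nat (d i) * (?G p j * snd p i $$ (m,s))"
          using dsSmult_entry[OF conjunct2[OF mem[OF p]] i m s] B_E_left[OF conjunct1[OF mem[OF p]] i j r]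
          by simp
      qed
      also have "\<dots> = of_nat (d i) * sum_list (map (\<lambda>p. ?G p j * snd p i $$ (m,s)) gs)"
        by (rule sum_list_const_mult)
      finally show ?thesis using dnz[OF i]
        by (auto simp: field_simps split: if_splits)
    qed
    have "dsSum k d (map (\<lambda>p. dsMult k (fst p) (snd p)) gs) i $$ (r,s)
        = sum_list (map (\<lambda>y. y i $$ (r,s)) (map (\<lambda>p. dsMult k (fst p) (snd p)) gs))"
      by (rule dsSum_entry[OF ys i r s])
    also have "\<dots> = sum_list (map (\<lambda>p. \<Sum>m<d i. \<Sum>j<d i. ?v i $$ (j,m) * (?G p j * snd p i $$ (m,s))) gs)"
      unfolding map_map
    proof (rule arg_cong[where f=sum_list], rule map_cong[OF refl])
      fix p assume p: "p \<in> set gs"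
      have g1: "fst p \<in> dsA k d" and g2: "snd p \<in> dsA k d" using mem[OF p] by auto
      have fe: "fst p i $$ (r,m) = (\<Sum>j<d i. ?G p j * ?v i $$ (j,m))" if m: "m < d i" for m
      proof -
        have "dsMult k (dsMult k (fst p) ?u) ?v = fst p"
          using dsMult_assoc[OF g1 uF_A vF_A] uv dsMult_one_right[OF g1] by simp
        then show ?thesis using dsMult_entry[OF dsMult_A[OF g1 uF_A] vF_A i r m] by simp
      qed
      show "((\<lambda>y. y i $$ (r,s)) \<circ> (\<lambda>p. dsMult k (fst p) (snd p))) p
          = (\<Sum>m<d i. \<Sum>j<d i. ?v i $$ (j,m) * (?G p j * snd p i $$ (m,s)))"
        using dsMult_entry[OF g1 g2 i r s]
        by (simp add: fe sum_distrib_left mult_ac)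
    qed
    also have "\<dots> = (\<Sum>m<d i. \<Sum>j<d i. ?v i $$ (j,m) * sum_list (map (\<lambda>p. ?G p j * snd p i $$ (m,s)) gs))"
      by (simp add: sum_list_sum_swap sum_list_const_mult)
    also have "\<dots> = (\<Sum>m<d i. \<Sum>j<d i. ?v i $$ (j,m) * (if j = m \<and> r = s then 1 / of_nat (d i) else 0))"
      by (intro sum.cong refl) (simp add: key)
    also have "\<dots> = (\<Sum>m<d i. if r = s then ?v i $$ (m,m) / of_nat (d i) else 0)"
      by (intro sum.cong refl) (auto simp: if_distrib cong: if_cong)
    also have "\<dots> = LF k d ?v i $$ (r,s)"
      using i r s dsA_dims[OF vF_A i]
      by (auto simp: LF_def mtrace_def sum_divide_distrib)
    finally show "dsSum k d (map (\<lambda>p. dsMult k (fst p) (snd p)) gs) i $$ (r,s) = LF k d ?v i $$ (r,s)" .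
  qed
qed

lemma ell_LF: "frob_ell k d B = LF k d (vF k d B)"
proof -
  have "is_copairing k d B (SOME gs. is_copairing k d B gs)"
    using copairing_exists by (rule someI_ex)
  then show ?thesis unfolding frob_ell_def Let_def by (rule copairing_ell)
qed


lemma eps0_mult_minus:
  assumes Y: "Y \<in> dsA k d" and P: "P \<in> dsA k d" and Q: "Q \<in> dsA k d"
  shows "eps0 k d (dsMult k Y (dsMinus k P Q)) = eps0 k d (dsMult k Y P) - eps0 k d (dsMult k Y Q)"
  unfolding eps0_mult[OF Y dsMinus_A[OF P Q]] eps0_mult[OF Y P] eps0_mult[OF Y Q] sum_subtractf[symmetric]
  by (intro sum.cong refl) (simp add: dsMinus_entry[OF P Q] right_diff_distrib sum_subtractf)

lemma Y_entry:
  assumes i: "i \<in> {1..k}" and m: "m < d i" and j: "j < d i"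
  shows "dsMult k (uF k d B) (LF k d (vF k d B)) i $$ (m,j) = mtrace (vF k d B i) / of_nat (d i) * uF k d B i $$ (m,j)"
proof -
  have "dsMult k (uF k d B) (LF k d (vF k d B)) i $$ (m,j)
      = (\<Sum>t<d i. uF k d B i $$ (m,t) * LF k d (vF k d B) i $$ (t,j))"
    by (rule dsMult_entry[OF uF_A LF_A i m j])
  also have "\<dots> = (\<Sum>t<d i. if t = j then mtrace (vF k d B i) / of_nat (d i) * uF k d B i $$ (m,t) else 0)"
    using i j by (intro sum.cong refl) (auto simp: LF_def)
  also have "\<dots> = mtrace (vF k d B i) / of_nat (d i) * uF k d B i $$ (m,j)"
    using j by simp
  finally show ?thesis .
qed

lemma ws_scalar:
  assumes ws: "weakly_symmetric k d B" and i: "i \<in> {1..k}" and tr: "mtrace (vF k d B i) \<noteq> 0"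
    and m: "m < d i" and j: "j < d i" and l: "l < d i"
  shows "uF k d B i $$ (m,j) = (if m = j then uF k d B i $$ (l,l) else 0)"
proof -
  let ?u = "uF k d B" and ?L = "LF k d (vF k d B)"
  let ?Y = "dsMult k ?u ?L"
  let ?a = "dsE k d i j l" and ?b = "dsE k d i l m"
  have YA: "?Y \<in> dsA k d" by (rule dsMult_A[OF uF_A LF_A])
  have PA: "dsMult k ?a ?b \<in> dsA k d" and QA: "dsMult k ?b ?a \<in> dsA k d"
    by (auto intro!: dsMult_A dsE_A)
  have "0 = frob_eps k d B (dsMult k (frob_ell k d B) (dsMinus k (dsMult k ?a ?b) (dsMult k ?b ?a)))"
    using ws dsE_A unfolding weakly_symmetric_def by metis
  also have "\<dots> = eps0 k d (dsMult k ?u (dsMult k ?L (dsMinus k (dsMult k ?a ?b) (dsMult k ?b ?a))))"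
    unfolding ell_LF by (rule eps_u[OF dsMult_A[OF LF_A dsMinus_A[OF PA QA]]])
  also have "\<dots> = eps0 k d (dsMult k ?Y (dsMinus k (dsMult k ?a ?b) (dsMult k ?b ?a)))"
    by (simp add: dsMult_assoc[OF uF_A LF_A dsMinus_A[OF PA QA]])
  also have "\<dots> = eps0 k d (dsMult k ?Y (dsMult k ?a ?b)) - eps0 k d (dsMult k ?Y (dsMult k ?b ?a))"
    by (rule eps0_mult_minus[OF YA PA QA])
  also have "eps0 k d (dsMult k ?Y (dsMult k ?a ?b)) = eps0 k d (dsMult k (dsMult k ?Y ?a) ?b)"
    by (simp add: dsMult_assoc[OF YA dsE_A dsE_A])
  also have "\<dots> = of_nat (d i) * dsMult k ?Y ?a i $$ (m,l)"
    by (rule eps0_mult_E[OF dsMult_A[OF YA dsE_A] i l m])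
  also have "dsMult k ?Y ?a i $$ (m,l) = ?Y i $$ (m,j)"
    using dsMult_E_entry[OF YA i m l j, where j=l] by simp
  also have "eps0 k d (dsMult k ?Y (dsMult k ?b ?a)) = eps0 k d (dsMult k (dsMult k ?Y ?b) ?a)"
    by (simp add: dsMult_assoc[OF YA dsE_A dsE_A])
  also have "\<dots> = of_nat (d i) * dsMult k ?Y ?b i $$ (l,j)"
    by (rule eps0_mult_E[OF dsMult_A[OF YA dsE_A] i j l])
  also have "dsMult k ?Y ?b i $$ (l,j) = (if j = m then ?Y i $$ (l,l) else 0)"
    using dsMult_E_entry[OF YA i l j l, where j=m] by simp
  finally have "?Y i $$ (m,j) = (if j = m then ?Y i $$ (l,l) else 0)"
    using dnz[OF i] by (auto split: if_splits)
  then show ?thesis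
    unfolding Y_entry[OF i m j] Y_entry[OF i l l] using tr dnz[OF i] by (auto split: if_splits)
qed

lemma frob_dim_formula:
  "frob_dim k d B n = (\<Sum>i\<in>{1..k}. of_nat (d i) * (mtrace (vF k d B i) / of_nat (d i)) ^ n * mtrace (uF k d B i))"
proof -
  let ?u = "uF k d B" and ?L = "LF k d (vF k d B)"
  have "frob_dim k d B n = eps0 k d (dsMult k ?u (dsPow k ?L n))"
    unfolding frob_dim_def ell_LF by (rule eps_u[OF dsPow_A[OF LF_A]])
  also have "\<dots> = (\<Sum>i\<in>{1..k}. of_nat (d i) * (mtrace (vF k d B i) / of_nat (d i)) ^ n * mtrace (?u i))"
    unfolding eps0_def
  proof (intro sum.cong refl)
    fix i assume i: "i \<in> {1..k}"
    let ?c = "mtrace (vF k d B i) / of_nat (d i)"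
    have ui: "?u i \<in> carrier_mat (d i) (d i)" by (rule dsA_D(1)[OF uF_A i])
    have "dsMult k ?u (dsPow k ?L n) i = ?u i * (?c ^ n \<cdot>\<^sub>m 1\<^sub>m (d i))"
      using i by (simp add: dsMult_def dsPow_def LF_def pow_smult_one)
    also have "\<dots> = ?c ^ n \<cdot>\<^sub>m ?u i"
      using mult_smult_distrib[OF ui, of "1\<^sub>m (d i)" "d i" "?c ^ n"] ui by simp
    finally show "of_nat (d i) * mtrace (dsMult k ?u (dsPow k ?L n) i) = of_nat (d i) * ?c ^ n * mtrace (?u i)"
      using mtrace_smult[OF ui] by simp
  qed
  finally show ?thesis .
qed

end

theorem mainTheorem5:
  fixes k :: nat and d :: "nat \<Rightarrow> nat"
    and B :: "(nat \<Rightarrow> 'a::field_char_0 mat) \<Rightarrow> (nat \<Rightarrow> 'a mat) \<Rightarrow> 'a"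
  assumes dpos: "\<forall>i\<in>{1..k}. 0 < d i"
    and frob: "frobenius_form k d B"
    and ws: "weakly_symmetric k d B"
  shows "\<exists>I u v \<mu>. I \<subseteq> {1..k} \<and> (\<forall>i\<in>{1..k}. d i = 1 \<longrightarrow> i \<in> I) \<and>
           u \<in> dsA k d \<and> v \<in> dsA k d \<and>
           dsMult k u v = dsOne k d \<and> dsMult k v u = dsOne k d \<and>
           (\<forall>a\<in>dsA k d. \<forall>b\<in>dsA k d. B a b = eps0 k d (dsMult k u (dsMult k a b))) \<and>
           (\<forall>i\<in>{1..k} - I. mtrace (v i) = 0) \<and>
           (\<forall>i\<in>I. \<mu> i \<noteq> 0 \<and> u i = inverse (\<mu> i) \<cdot>\<^sub>m 1\<^sub>m (d i)) \<and>
           frob_dim k d B 1 = of_nat (\<Sum>i\<in>I. (d i)\<^sup>2) \<and>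
           (\<Sum>i\<in>I. (d i)\<^sup>2) \<le> (\<Sum>i\<in>{1..k}. (d i)\<^sup>2) \<and>
           (\<forall>j\<ge>1. frob_dim k d B j = (\<Sum>i\<in>I. of_nat ((d i)\<^sup>2) * inverse (\<mu> i) * \<mu> i ^ j)) \<and>
           frob_dim k d B 0 = (\<Sum>i\<in>I. of_nat ((d i)\<^sup>2) * inverse (\<mu> i))
                              + (\<Sum>i\<in>{1..k} - I. of_nat (d i) * mtrace (u i))"
proof -
  let ?u = "uF k d B" and ?v = "vF k d B"
  define I where "I = {i\<in>{1..k}. mtrace (?v i) \<noteq> 0}"
  define \<mu> where "\<mu> = (\<lambda>i. inverse (?u i $$ (0,0)))"
  have IK: "I \<subseteq> {1..k}" unfolding I_def by auto
  have uA: "?u \<in> dsA k d" by (rule uF_A[OF dpos frob])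
  have vA: "?v \<in> dsA k d" by (rule vF_A[OF dpos frob])
  have uvb: "\<And>i. i \<in> {1..k} \<Longrightarrow> ?u i * ?v i = 1\<^sub>m (d i)" by (rule uv_block[OF dpos frob])
  have vub: "\<And>i. i \<in> {1..k} \<Longrightarrow> ?v i * ?u i = 1\<^sub>m (d i)" by (rule vu_block[OF dpos frob])
  have scal: "?u i = ?u i $$ (0,0) \<cdot>\<^sub>m 1\<^sub>m (d i)" if i: "i \<in> I" for i
  proof -
    have i1: "i \<in> {1..k}" and tr: "mtrace (?v i) \<noteq> 0" using i unfolding I_def by auto
    have d0: "0 < d i" using dpos i1 by auto
    show ?thesis
    proof (rule eq_matI)
      fix r s assume r0: "r < dim_row (?u i $$ (0,0) \<cdot>\<^sub>m 1\<^sub>m (d i))" and s0: "s < dim_col (?u i $$ (0,0) \<cdot>\<^sub>m 1\<^sub>m (d i))"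
      then have r: "r < d i" and s: "s < d i" by auto
      have "?u i $$ (r,s) = (if r = s then ?u i $$ (0,0) else 0)"
        by (rule ws_scalar[OF dpos frob ws i1 tr r s d0])
      then show "?u i $$ (r,s) = (?u i $$ (0,0) \<cdot>\<^sub>m 1\<^sub>m (d i)) $$ (r,s)"
        using r s by simp
    qed (use dsA_dims[OF uA i1] in simp_all)
  qed
  have props: "\<mu> i \<noteq> 0 \<and> ?u i = inverse (\<mu> i) \<cdot>\<^sub>m 1\<^sub>m (d i) \<and>
      mtrace (?v i) = of_nat (d i) * \<mu> i \<and> mtrace (?u i) = of_nat (d i) * inverse (\<mu> i)" if i: "i \<in> I" for i
  proof -
    have i1: "i \<in> {1..k}" using i unfolding I_def by auto
    have d0: "0 < d i" using dpos i1 by auto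
    obtain \<alpha> where \<alpha>: "\<alpha> = ?u i $$ (0,0)" by blast
    have sc: "?u i = \<alpha> \<cdot>\<^sub>m 1\<^sub>m (d i)" using scal[OF i] unfolding \<alpha>[symmetric] .
    have vi: "?v i \<in> carrier_mat (d i) (d i)" by (rule dsA_D(1)[OF vA i1])
    have "?v i * ?u i = \<alpha> \<cdot>\<^sub>m ?v i"
      unfolding sc using mult_smult_distrib[OF vi, of "1\<^sub>m (d i)" "d i" \<alpha>] vi by simp
    then have e: "\<alpha> \<cdot>\<^sub>m ?v i = 1\<^sub>m (d i)" using vub[OF i1] by simp
    have ent: "\<alpha> * ?v i $$ (r,s) = (if r = s then 1 else 0)" if "r < d i" "s < d i" for r s
      using arg_cong[OF e, of "\<lambda>M. M $$ (r,s)"] that vi by auto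
    have a0: "\<alpha> \<noteq> 0" using ent[OF d0 d0] by auto
    have vent: "?v i $$ (r,r) = inverse \<alpha>" if "r < d i" for r
      using ent[OF that that] a0 by (simp add: field_simps)
    have trv: "mtrace (?v i) = of_nat (d i) * inverse \<alpha>"
      unfolding mtrace_def using vi vent by simp
    have uent: "?u i $$ (r,r) = \<alpha>" if "r < d i" for r
      unfolding sc using that by simp
    have tru: "mtrace (?u i) = of_nat (d i) * \<alpha>"
      unfolding mtrace_def using dsA_dims[OF uA i1] uent by simp
    have mu: "\<mu> i = inverse \<alpha>" unfolding \<mu>_def \<alpha> ..
    show ?thesis unfolding mu using a0 sc trv tru by simp
  qed
  have pmu: "\<And>i. i \<in> I \<Longrightarrow> \<mu> i \<noteq> 0" using props by blast
  have ptv: "\<And>i. i \<in> I \<Longrightarrow> mtrace (?v i) = of_nat (d i) * \<mu> i" using props by blast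
  have ptu: "\<And>i. i \<in> I \<Longrightarrow> mtrace (?u i) = of_nat (d i) * inverse (\<mu> i)" using props by blast
  have d1: "i \<in> I" if i1: "i \<in> {1..k}" and di: "d i = 1" for i
  proof -
    have "(?u i * ?v i) $$ (0,0) = 1" using uvb[OF i1] di by simp
    then have "?u i $$ (0,0) * ?v i $$ (0,0) = 1"
      using dsA_dims[OF uA i1] dsA_dims[OF vA i1] di by (simp add: scalar_prod_def)
    then have "?v i $$ (0,0) \<noteq> 0" by auto
    moreover have "mtrace (?v i) = ?v i $$ (0,0)"
      unfolding mtrace_def using dsA_dims[OF vA i1] di by simp
    ultimately show ?thesis unfolding I_def using i1 by simp
  qed
  have rest: "mtrace (?v i) = 0" if "i \<in> {1..k} - I" for i using that unfolding I_def by auto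
  have fin: "finite {1..k}" by simp
  have split: "(\<Sum>i\<in>{1..k}. f i) = (\<Sum>i\<in>I. f i) + (\<Sum>i\<in>{1..k} - I. f i)" for f :: "nat \<Rightarrow> 'a"
    using sum.subset_diff[OF IK fin, of f] by (simp add: add.commute)
  have dimj: "frob_dim k d B j = (\<Sum>i\<in>I. of_nat ((d i)\<^sup>2) * inverse (\<mu> i) * \<mu> i ^ j)" if j: "j \<ge> 1" for j
  proof -
    have "frob_dim k d B j = (\<Sum>i\<in>{1..k}. of_nat (d i) * (mtrace (?v i) / of_nat (d i)) ^ j * mtrace (?u i))"
      by (rule frob_dim_formula[OF dpos frob])
    also have "\<dots> = (\<Sum>i\<in>I. of_nat (d i) * (mtrace (?v i) / of_nat (d i)) ^ j * mtrace (?u i))"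
    proof -
      have z: "(\<Sum>i\<in>{1..k} - I. of_nat (d i) * (mtrace (?v i) / of_nat (d i)) ^ j * mtrace (?u i)) = 0"
        by (rule sum.neutral) (use rest j in auto)
      show ?thesis
        using split[of "\<lambda>i. of_nat (d i) * (mtrace (?v i) / of_nat (d i)) ^ j * mtrace (?u i)"] z by simp
    qed
    also have "\<dots> = (\<Sum>i\<in>I. of_nat ((d i)\<^sup>2) * inverse (\<mu> i) * \<mu> i ^ j)"
    proof (rule sum.cong[OF refl])
      fix i assume i: "i \<in> I"
      have i1: "i \<in> {1..k}" using i unfolding I_def by auto
      show "of_nat (d i) * (mtrace (?v i) / of_nat (d i)) ^ j * mtrace (?u i) = of_nat ((d i)\<^sup>2) * inverse (\<mu> i) * \<mu> i ^ j"
        using pmu[OF i] ptv[OF i] ptu[OF i] dnz[OF dpos frob i1] by (simp add: power2_eq_square)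
    qed
    finally show ?thesis .
  qed
  have dim0: "frob_dim k d B 0 = (\<Sum>i\<in>I. of_nat ((d i)\<^sup>2) * inverse (\<mu> i)) + (\<Sum>i\<in>{1..k} - I. of_nat (d i) * mtrace (?u i))"
  proof -
    have "frob_dim k d B 0 = (\<Sum>i\<in>{1..k}. of_nat (d i) * (mtrace (?v i) / of_nat (d i)) ^ 0 * mtrace (?u i))"
      by (rule frob_dim_formula[OF dpos frob])
    also have "\<dots> = (\<Sum>i\<in>I. of_nat (d i) * mtrace (?u i)) + (\<Sum>i\<in>{1..k} - I. of_nat (d i) * mtrace (?u i))"
      using split[of "\<lambda>i. of_nat (d i) * mtrace (?u i)"] by simp
    also have "(\<Sum>i\<in>I. of_nat (d i) * mtrace (?u i)) = (\<Sum>i\<in>I. of_nat ((d i)\<^sup>2) * inverse (\<mu> i))"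
      by (rule sum.cong[OF refl]) (simp add: ptu power2_eq_square)
    finally show ?thesis .
  qed
  have dim1: "frob_dim k d B 1 = of_nat (\<Sum>i\<in>I. (d i)\<^sup>2)"
  proof -
    have "frob_dim k d B 1 = (\<Sum>i\<in>I. of_nat ((d i)\<^sup>2) * inverse (\<mu> i) * \<mu> i ^ 1)"
      by (rule dimj) simp
    also have "\<dots> = (\<Sum>i\<in>I. of_nat ((d i)\<^sup>2))"
      by (rule sum.cong[OF refl]) (use pmu in simp)
    finally show ?thesis by (simp add: of_nat_sum)
  qed
  have le: "(\<Sum>i\<in>I. (d i)\<^sup>2) \<le> (\<Sum>i\<in>{1..k}. (d i)\<^sup>2)"
    by (rule sum_mono2[OF fin IK]) auto
  have Bf: "\<forall>a\<in>dsA k d. \<forall>b\<in>dsA k d. B a b = eps0 k d (dsMult k ?u (dsMult k a b))"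
    using B_u[OF dpos frob] by blast
  show ?thesis
    apply (rule exI[of _ I], rule exI[of _ ?u], rule exI[of _ ?v], rule exI[of _ \<mu>])
    apply (intro conjI)
    subgoal by (rule IK)
    subgoal using d1 by blast
    subgoal by (rule uA)
    subgoal by (rule vA)
    subgoal by (rule uv[OF dpos frob])
    subgoal by (rule vu[OF dpos frob])
    subgoal by (rule Bf)
    subgoal using rest by blast
    subgoal using props by blast
    subgoal by (rule dim1)
    subgoal by (rule le)
    subgoal using dimj by blast
    subgoal by (rule dim0)
    done
qed

end
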